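(* Let $G$ be a group with a finite generating set $S$ not containing the identity, and let $d_W$ and $d_C$ be the word metric and the cardinal metric on $G$ with respect to $S$. (1) If $(G,d_W)$ has infinite diameter, then $(G,d_W)$ and $(G,d_C)$ are not bi-Lipschitz equivalent. (2) If $(G,d_W)$ has finite diameter, then $(G,d_W)$ and $(G,d_C)$ are bi-Lipschitz equivalent, and therefore they are quasi-isometric.
   Context: The word metric: $d_W(g,g)=0$ and for $g\ne h$, $d_W(g,h)$ is the least $n\in\mathbb{N}$ such that $g^{-1}h=s_1^{\epsilon_1}\cdots s_n^{\epsilon_n}$ with $s_i\in S$, $\epsilon_i\in\{\pm1\}$. The cardinal norm is $\|g\| = \min\{|A| : A\subseteq S,\ g\in\langle A\rangle\}$, where $\langle A\rangle$ is the subgroup generated by $A$, and $d_C(g,h)=\|g^{-1}h\|$. *)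

theory Defs
  imports "HOL-Algebra.Algebra"
begin

definition word_norm :: "('a, 'b) monoid_scheme \<Rightarrow> 'a set \<Rightarrow> 'a \<Rightarrow> nat" where
  "word_norm G S x = (LEAST n. \<exists>l. length l = n \<and> set l \<subseteq> S \<union> (m_inv G ` S)
      \<and> x = foldr (\<lambda>a b. a \<otimes>\<^bsub>G\<^esub> b) l \<one>\<^bsub>G\<^esub>)"

definition word_dist :: "('a, 'b) monoid_scheme \<Rightarrow> 'a set \<Rightarrow> 'a \<Rightarrow> 'a \<Rightarrow> nat" where
  "word_dist G S g h = word_norm G S (inv\<^bsub>G\<^esub> g \<otimes>\<^bsub>G\<^esub> h)"

definition cardinal_norm :: "('a, 'b) monoid_scheme \<Rightarrow> 'a set \<Rightarrow> 'a \<Rightarrow> nat" where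
  "cardinal_norm G S x = (LEAST n. \<exists>A. A \<subseteq> S \<and> card A = n \<and> x \<in> generate G A)"

definition cardinal_dist :: "('a, 'b) monoid_scheme \<Rightarrow> 'a set \<Rightarrow> 'a \<Rightarrow> 'a \<Rightarrow> nat" where
  "cardinal_dist G S g h = cardinal_norm G S (inv\<^bsub>G\<^esub> g \<otimes>\<^bsub>G\<^esub> h)"

definition finite_diameter :: "'a set \<Rightarrow> ('a \<Rightarrow> 'a \<Rightarrow> real) \<Rightarrow> bool" where
  "finite_diameter M1 dist0 = (\<exists>B. \<forall>x\<in>M1. \<forall>y\<in>M1. dist0 x y \<le> B)"

definition bilipschitz_equiv ::
  "'a set \<Rightarrow> ('a \<Rightarrow> 'a \<Rightarrow> real) \<Rightarrow> 'b set \<Rightarrow> ('b \<Rightarrow> 'b \<Rightarrow> real) \<Rightarrow> bool" where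
  "bilipschitz_equiv M1 d1 M2 d2 = (\<exists>f K. bij_betw f M1 M2 \<and> K \<ge> 1 \<and>
     (\<forall>x\<in>M1. \<forall>y\<in>M1. d1 x y / K \<le> d2 (f x) (f y) \<and> d2 (f x) (f y) \<le> K * d1 x y))"

definition quasi_isometric ::
  "'a set \<Rightarrow> ('a \<Rightarrow> 'a \<Rightarrow> real) \<Rightarrow> 'b set \<Rightarrow> ('b \<Rightarrow> 'b \<Rightarrow> real) \<Rightarrow> bool" where
  "quasi_isometric M1 d1 M2 d2 = (\<exists>f K C. f ` M1 \<subseteq> M2 \<and> K \<ge> 1 \<and> C \<ge> 0 \<and>
     (\<forall>x\<in>M1. \<forall>y\<in>M1. d1 x y / K - C \<le> d2 (f x) (f y) \<and> d2 (f x) (f y) \<le> K * d1 x y + C) \<and>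
     (\<forall>y\<in>M2. \<exists>x\<in>M1. d2 y (f x) \<le> C))"

end

theory Submission
  imports Defs
begin

lemma word_exists:
  assumes "group G" and "S \<subseteq> carrier G" and "x \<in> generate G S"
  shows "\<exists>l. set l \<subseteq> S \<union> (m_inv G ` S) \<and> x = foldr (\<lambda>a b. a \<otimes>\<^bsub>G\<^esub> b) l \<one>\<^bsub>G\<^esub>"
  using assms(3)
proof (induction rule: generate.induct)
  case one
  show ?case by (rule exI[of _ "[]"]) simp
next
  case (incl h)
  show ?case
    by (rule exI[of _ "[h]"]) (use incl assms in \<open>auto simp: group.is_monoid monoid.r_one\<close>)
next
  case (inv h)
  have "inv\<^bsub>G\<^esub> h \<in> carrier G" using inv assms by (meson group.inv_closed subsetD)
  then show ?case
    by (intro exI[of _ "[inv\<^bsub>G\<^esub> h]"]) (use inv assms in \<open>auto simp: group.is_monoid monoid.r_one\<close>)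
next
  case (eng h1 h2)
  then obtain l1 l2 where l1: "set l1 \<subseteq> S \<union> (m_inv G ` S)" "h1 = foldr (\<lambda>a b. a \<otimes>\<^bsub>G\<^esub> b) l1 \<one>\<^bsub>G\<^esub>"
    and l2: "set l2 \<subseteq> S \<union> (m_inv G ` S)" "h2 = foldr (\<lambda>a b. a \<otimes>\<^bsub>G\<^esub> b) l2 \<one>\<^bsub>G\<^esub>" by blast
  have car: "S \<union> (m_inv G ` S) \<subseteq> carrier G" using assms by (auto intro: group.inv_closed)
  have gen: "set l \<subseteq> carrier G \<Longrightarrow> set l' \<subseteq> carrier G \<Longrightarrow>
     foldr (\<lambda>a b. a \<otimes>\<^bsub>G\<^esub> b) (l @ l') \<one>\<^bsub>G\<^esub> =
     foldr (\<lambda>a b. a \<otimes>\<^bsub>G\<^esub> b) l \<one>\<^bsub>G\<^esub> \<otimes>\<^bsub>G\<^esub> foldr (\<lambda>a b. a \<otimes>\<^bsub>G\<^esub> b) l' \<one>\<^bsub>G\<^esub>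
     \<and> foldr (\<lambda>a b. a \<otimes>\<^bsub>G\<^esub> b) l \<one>\<^bsub>G\<^esub> \<in> carrier G" for l l'
  proof (induction l)
    case Nil
    have "foldr (\<lambda>a b. a \<otimes>\<^bsub>G\<^esub> b) l' \<one>\<^bsub>G\<^esub> \<in> carrier G"
      using Nil(2) by (induction l') (auto simp: assms(1) group.is_monoid monoid.m_closed monoid.one_closed)
    then show ?case using assms(1) by (simp add: group.is_monoid monoid.l_one monoid.one_closed)
  next
    case (Cons a l)
    have "foldr (\<lambda>a b. a \<otimes>\<^bsub>G\<^esub> b) l' \<one>\<^bsub>G\<^esub> \<in> carrier G"
      using Cons(3) by (induction l') (auto simp: assms(1) group.is_monoid monoid.m_closed monoid.one_closed)
    then show ?case using Cons assms(1) by (simp add: group.is_monoid monoid.m_assoc monoid.m_closed)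
  qed
  show ?case
  proof (rule exI[of _ "l1 @ l2"])
    have c: "set l1 \<subseteq> carrier G" "set l2 \<subseteq> carrier G" using l1(1) l2(1) car by blast+
    show "set (l1 @ l2) \<subseteq> S \<union> m_inv G ` S \<and> h1 \<otimes>\<^bsub>G\<^esub> h2 = foldr (\<lambda>a b. a \<otimes>\<^bsub>G\<^esub> b) (l1 @ l2) \<one>\<^bsub>G\<^esub>"
      using l1 l2 gen[OF c] by simp
  qed
qed

theorem mainTheorem7:
  fixes G (structure) and S :: "'a set"
  assumes "group G" and "finite S" and "S \<subseteq> carrier G" and "\<one> \<notin> S"
    and "generate G S = carrier G"
  shows "(\<not> finite_diameter (carrier G) (\<lambda>g h. real (word_dist G S g h)) \<longrightarrow>
           \<not> bilipschitz_equiv (carrier G) (\<lambda>g h. real (word_dist G S g h))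
                                (carrier G) (\<lambda>g h. real (cardinal_dist G S g h)))
       \<and> (finite_diameter (carrier G) (\<lambda>g h. real (word_dist G S g h)) \<longrightarrow>
           bilipschitz_equiv (carrier G) (\<lambda>g h. real (word_dist G S g h))
                             (carrier G) (\<lambda>g h. real (cardinal_dist G S g h))
         \<and> quasi_isometric (carrier G) (\<lambda>g h. real (word_dist G S g h))
                           (carrier G) (\<lambda>g h. real (cardinal_dist G S g h)))"
proof -
  interpret group G by fact
  have cn_le: "cardinal_norm G S z \<le> card S" if "z \<in> carrier G" for z
    unfolding cardinal_norm_def using that assms(5) by (intro Least_le) auto
  have cn_one: "cardinal_norm G S \<one> = 0"
    unfolding cardinal_norm_def by (rule Least_eq_0) (auto intro: generate.one)
  have cn_pos: "cardinal_norm G S z \<ge> 1" if "z \<in> carrier G" "z \<noteq> \<one>" for z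
  proof (rule ccontr)
    assume "\<not> ?thesis"
    hence "cardinal_norm G S z = 0" by simp
    moreover have "\<exists>A. A \<subseteq> S \<and> card A = cardinal_norm G S z \<and> z \<in> generate G A"
      unfolding cardinal_norm_def
      by (rule LeastI[of _ "card S"]) (use that assms(5) in auto)
    ultimately obtain A where "A \<subseteq> S" "card A = 0" "z \<in> generate G A" by auto
    then have "A = {}" using assms(2) finite_subset by fastforce
    then show False using \<open>z \<in> generate G A\<close> that generate_empty by auto
  qed
  have wn_one: "word_norm G S \<one> = 0"
    unfolding word_norm_def by (rule Least_eq_0) (rule exI[of _ "[]"], simp)
  have wn_pos: "word_norm G S z \<ge> 1" if "z \<in> carrier G" "z \<noteq> \<one>" for z
  proof (rule ccontr)
    assume "\<not> ?thesis"
    hence "word_norm G S z = 0" by simp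
    obtain l where l: "set l \<subseteq> S \<union> (m_inv G ` S)" "z = foldr (\<lambda>a b. a \<otimes> b) l \<one>"
    proof -
      have "z \<in> generate G S" using \<open>z \<in> carrier G\<close> assms(5) by simp
      then show ?thesis using word_exists[OF assms(1) assms(3), of z] by (metis that)
    qed
    have "\<exists>l. length l = word_norm G S z \<and> set l \<subseteq> S \<union> (m_inv G ` S) \<and> z = foldr (\<lambda>a b. a \<otimes> b) l \<one>"
      unfolding word_norm_def by (rule LeastI[of _ "length l"]) (use l in auto)
    with \<open>word_norm G S z = 0\<close> show False using that by auto
  qed
  have dz: "inv g \<otimes> h = \<one> \<longleftrightarrow> g = h" if "g \<in> carrier G" "h \<in> carrier G" for g h
    using that by (metis inv_equality l_inv r_inv inv_closed)
  have part1: "\<not> bilipschitz_equiv (carrier G) (\<lambda>g h. real (word_dist G S g h))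
                                (carrier G) (\<lambda>g h. real (cardinal_dist G S g h))"
    if nfd: "\<not> finite_diameter (carrier G) (\<lambda>g h. real (word_dist G S g h))"
  proof
    assume "bilipschitz_equiv (carrier G) (\<lambda>g h. real (word_dist G S g h))
                                (carrier G) (\<lambda>g h. real (cardinal_dist G S g h))"
    then obtain f K where f: "bij_betw f (carrier G) (carrier G)" "K \<ge> 1"
      "\<forall>x\<in>carrier G. \<forall>y\<in>carrier G. real (word_dist G S x y) / K \<le> real (cardinal_dist G S (f x) (f y))"
      unfolding bilipschitz_equiv_def by blast
    have "real (word_dist G S x y) \<le> K * card S" if "x \<in> carrier G" "y \<in> carrier G" for x y
    proof -
      have fx: "f x \<in> carrier G" "f y \<in> carrier G" using f(1) that bij_betwE by blast+
      have "real (cardinal_dist G S (f x) (f y)) \<le> card S"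
        unfolding cardinal_dist_def using cn_le fx by simp
      then have "real (word_dist G S x y) / K \<le> card S" using f(3) that by fastforce
      then show ?thesis using f(2) by (simp add: divide_le_eq mult.commute)
    qed
    then show False using nfd unfolding finite_diameter_def by blast
  qed
  have part2: "bilipschitz_equiv (carrier G) (\<lambda>g h. real (word_dist G S g h))
                             (carrier G) (\<lambda>g h. real (cardinal_dist G S g h))
         \<and> quasi_isometric (carrier G) (\<lambda>g h. real (word_dist G S g h))
                           (carrier G) (\<lambda>g h. real (cardinal_dist G S g h))"
    if fd: "finite_diameter (carrier G) (\<lambda>g h. real (word_dist G S g h))"
  proof -
    obtain B where B: "\<forall>x\<in>carrier G. \<forall>y\<in>carrier G. real (word_dist G S x y) \<le> B"
      using fd unfolding finite_diameter_def by blast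
    define K where "K = max 1 (max B (real (card S)))"
    have K1: "K \<ge> 1" "K \<ge> B" "K \<ge> card S" unfolding K_def by auto
    have key: "real (word_dist G S x y) / K \<le> real (cardinal_dist G S x y) \<and>
               real (cardinal_dist G S x y) \<le> K * real (word_dist G S x y)"
      if xy: "x \<in> carrier G" "y \<in> carrier G" for x y
    proof (cases "x = y")
      case True
      then show ?thesis using xy by (simp add: word_dist_def cardinal_dist_def wn_one cn_one)
    next
      case False
      have z: "inv x \<otimes> y \<in> carrier G" "inv x \<otimes> y \<noteq> \<one>" using xy dz False by auto
      have w1: "real (word_dist G S x y) \<ge> 1" unfolding word_dist_def using wn_pos[OF z] by simp
      have c1: "real (cardinal_dist G S x y) \<ge> 1" unfolding cardinal_dist_def using cn_pos[OF z] by simp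
      have cS: "real (cardinal_dist G S x y) \<le> card S" unfolding cardinal_dist_def using cn_le[OF z(1)] by simp
      have "real (word_dist G S x y) / K \<le> 1" proof -
        have "real (word_dist G S x y) \<le> K" using B xy K1 by fastforce
        then show ?thesis using K1 by (simp add: divide_le_eq)
      qed
      moreover have "K \<le> K * real (word_dist G S x y)" using w1 K1 by simp
      ultimately show ?thesis using c1 cS K1 by linarith
    qed
    have BL: "bilipschitz_equiv (carrier G) (\<lambda>g h. real (word_dist G S g h))
                             (carrier G) (\<lambda>g h. real (cardinal_dist G S g h))"
      unfolding bilipschitz_equiv_def
      by (rule exI[of _ id], rule exI[of _ K]) (use key K1 in auto)
    have cd0: "\<exists>x\<in>carrier G. real (cardinal_dist G S y (id x)) \<le> 0" if "y \<in> carrier G" for y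
      using that by (intro bexI[of _ y]) (auto simp: cardinal_dist_def cn_one)
    have QI: "quasi_isometric (carrier G) (\<lambda>g h. real (word_dist G S g h))
                           (carrier G) (\<lambda>g h. real (cardinal_dist G S g h))"
      unfolding quasi_isometric_def
      by (rule exI[of _ id], rule exI[of _ K], rule exI[of _ "0::real"]) (use key K1 cd0 in simp)
    show ?thesis using BL QI by blast
  qed
  show ?thesis using part1 part2 by blast
qed

end
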